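(* Let $W\subseteq C^\omega$ be a topologically closed objective and $\mu$ a cardinal, and assume that $(\mathrm{Res}(W),\subseteq)$ is well-founded and has no antichain of cardinality $\mu$. Let $(U,\le)$ be the partially ordered $C$-graph with $V(U)=(\mathrm{Res}(W)\setminus\{\emptyset\})\cup\{\top\}$ ($\top$ a fresh element), ordered by inclusion on $\mathrm{Res}(W)\setminus\{\emptyset\}$ and with $x\le\top$ for all $x$, and with edges $[u]\xrightarrow{c}[v]$ for all $[u],[v]\in \mathrm{Res}(W)\setminus\{\emptyset\}$ and $c\in C$ with $[v]\subseteq[uc]$, together with $\top\xrightarrow{c}x$ for all $x\in V(U)$ and $c\in C$. Then for every cardinal $\kappa$, $(U,\le)$ is a well-monotone $(\kappa,W)$-universal graph of width $<\mu$.
   Context: For $L\subseteq C^*$, $\mathrm{Safe}(L)=\{w\in C^\omega: w\text{ has no prefix in }L\}$; an objective $W\subseteq C^\omega$ is topologically closed if $W=\mathrm{Safe}(L)$ for some $L$. For $u\in C^*$, the left quotient is $u^{-1}W=\{w\in C^\omega: uw\in W\}$, written $[u]$; $\mathrm{Res}(W)$ is the set of left quotients of $W$. A $C$-graph $G$: vertex set $V(G)$, edges $E(G)\subseteq V(G)\times C\times V(G)$ written $v\xrightarrow{c}v'$, every vertex with an outgoing edge. A $C$-tree is a $C$-graph with root $t_0$ such that each vertex has a unique path from $t_0$. A morphism maps vertices so that edges go to edges of the same colour. A vertex satisfies $W$ if every infinite path from it has colour sequence in $W$. Viewing $W$ as the valuation with values $\bot<\top$ ($\bot$ exactly on $W$),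 $G$ is $(\kappa,W)$-universal if for every $C$-tree $T$ of cardinality $<\kappa$ with root $t_0$ there is a morphism $\phi:T\to G$ such that $\phi(t_0)$ satisfies $W$ in $G$ whenever $t_0$ satisfies $W$ in $T$. A partially ordered graph $(G,\le)$ is monotone if $u\ge v\xrightarrow{c}v'\ge u'$ implies $u\xrightarrow{c}u'\in E(G)$, well-monotone if moreover $\le$ is well-founded; width $<\mu$ means no antichain of cardinality $\mu$. *)

theory Defs
  imports Main "HOL-Library.Omega_Words_Fun"
begin

definition Safe :: "'c list set \<Rightarrow> 'c word set" where
  "Safe L = {w. \<forall>n. prefix n w \<notin> L}"

definition topologically_closed :: "'c word set \<Rightarrow> bool" where
  "topologically_closed W \<longleftrightarrow> (\<exists>L. W = Safe L)"

definition left_quotient :: "'c list \<Rightarrow> 'c word set \<Rightarrow> 'c word set" where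
  "left_quotient u W = {w. u \<frown> w \<in> W}"

definition Res :: "'c word set \<Rightarrow> 'c word set set" where
  "Res W = {left_quotient u W | u. True}"

definition is_graph :: "'v set \<Rightarrow> ('v \<times> 'c \<times> 'v) set \<Rightarrow> bool" where
  "is_graph V E \<longleftrightarrow> E \<subseteq> V \<times> UNIV \<times> V \<and> (\<forall>v\<in>V. \<exists>c v'. (v, c, v') \<in> E)"

fun fpath :: "('v \<times> 'c \<times> 'v) set \<Rightarrow> 'v \<Rightarrow> ('v \<times> 'c \<times> 'v) list \<Rightarrow> 'v \<Rightarrow> bool" where
  "fpath E v [] v' \<longleftrightarrow> v = v'"
| "fpath E v (e # es) v' \<longleftrightarrow> fst e = v \<and> e \<in> E \<and> fpath E (snd (snd e)) es v'"

definition is_tree :: "'v set \<Rightarrow> ('v \<times> 'c \<times> 'v) set \<Rightarrow> 'v \<Rightarrow> bool" where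
  "is_tree V E t0 \<longleftrightarrow> is_graph V E \<and> t0 \<in> V \<and> (\<forall>v\<in>V. \<exists>!p. fpath E t0 p v)"

definition morphism :: "('v \<Rightarrow> 'u) \<Rightarrow> 'v set \<Rightarrow> ('v \<times> 'c \<times> 'v) set
    \<Rightarrow> 'u set \<Rightarrow> ('u \<times> 'c \<times> 'u) set \<Rightarrow> bool" where
  "morphism \<phi> V E V' E' \<longleftrightarrow> \<phi> ` V \<subseteq> V' \<and> (\<forall>(v, c, v')\<in>E. (\<phi> v, c, \<phi> v') \<in> E')"

definition satisfies :: "'c word set \<Rightarrow> ('v \<times> 'c \<times> 'v) set \<Rightarrow> 'v \<Rightarrow> bool" where
  "satisfies W E v \<longleftrightarrow>
     (\<forall>(\<rho> :: nat \<Rightarrow> 'v) (col :: 'c word).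
        \<rho> 0 = v \<and> (\<forall>i. (\<rho> i, col i, \<rho> (Suc i)) \<in> E) \<longrightarrow> col \<in> W)"

text \<open>(kappa,W)-universality; the tree vertex type is given by the itself-argument.
  Since the main theorem is polymorphic in that type, all trees are covered.\<close>
definition universal :: "'t itself \<Rightarrow> 'k rel \<Rightarrow> 'c word set \<Rightarrow> 'v set \<Rightarrow> ('v \<times> 'c \<times> 'v) set \<Rightarrow> bool" where
  "universal (_ :: 't itself) \<kappa> W V E \<longleftrightarrow>
     (\<forall>(VT :: 't set) (ET :: ('t \<times> 'c \<times> 't) set) t0.
        is_tree VT ET t0 \<and> (card_of VT, \<kappa>) \<in> ordLess \<longrightarrow>
        (\<exists>\<phi>. morphism \<phi> VT ET V E \<and> (satisfies W ET t0 \<longrightarrow> satisfies W E (\<phi> t0))))"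

definition partial_order_on_set :: "'v set \<Rightarrow> ('v \<Rightarrow> 'v \<Rightarrow> bool) \<Rightarrow> bool" where
  "partial_order_on_set V le \<longleftrightarrow>
     (\<forall>x\<in>V. le x x) \<and> (\<forall>x\<in>V. \<forall>y\<in>V. le x y \<and> le y x \<longrightarrow> x = y) \<and>
     (\<forall>x\<in>V. \<forall>y\<in>V. \<forall>z\<in>V. le x y \<and> le y z \<longrightarrow> le x z)"

definition monotone_graph :: "'v set \<Rightarrow> ('v \<times> 'c \<times> 'v) set \<Rightarrow> ('v \<Rightarrow> 'v \<Rightarrow> bool) \<Rightarrow> bool" where
  "monotone_graph V E le \<longleftrightarrow> is_graph V E \<and> partial_order_on_set V le \<and>
     (\<forall>u\<in>V. \<forall>v\<in>V. \<forall>v'\<in>V. \<forall>u'\<in>V. \<forall>c.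
        le v u \<and> (v, c, v') \<in> E \<and> le u' v' \<longrightarrow> (u, c, u') \<in> E)"

definition well_founded_on :: "'v set \<Rightarrow> ('v \<Rightarrow> 'v \<Rightarrow> bool) \<Rightarrow> bool" where
  "well_founded_on V le \<longleftrightarrow> wf {(x, y). x \<in> V \<and> y \<in> V \<and> le x y \<and> x \<noteq> y}"

definition well_monotone_graph :: "'v set \<Rightarrow> ('v \<times> 'c \<times> 'v) set \<Rightarrow> ('v \<Rightarrow> 'v \<Rightarrow> bool) \<Rightarrow> bool" where
  "well_monotone_graph V E le \<longleftrightarrow> monotone_graph V E le \<and> well_founded_on V le"

definition antichain_on :: "('v \<Rightarrow> 'v \<Rightarrow> bool) \<Rightarrow> 'v set \<Rightarrow> bool" where
  "antichain_on le A \<longleftrightarrow> (\<forall>x\<in>A. \<forall>y\<in>A. x \<noteq> y \<longrightarrow> \<not> le x y \<and> \<not> le y x)"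

definition width_less :: "'v set \<Rightarrow> ('v \<Rightarrow> 'v \<Rightarrow> bool) \<Rightarrow> 'm rel \<Rightarrow> bool" where
  "width_less V le \<mu> \<longleftrightarrow> (\<forall>A\<subseteq>V. antichain_on le A \<longrightarrow> (card_of A, \<mu>) \<notin> ordIso)"

section \<open>The graph U; None plays the role of the fresh top element\<close>

definition U_V :: "'c word set \<Rightarrow> 'c word set option set" where
  "U_V W = Some ` (Res W - {{}}) \<union> {None}"

fun U_le :: "'c word set option \<Rightarrow> 'c word set option \<Rightarrow> bool" where
  "U_le _ None = True"
| "U_le None (Some _) = False"
| "U_le (Some X) (Some Y) = (X \<subseteq> Y)"

definition U_E :: "'c word set \<Rightarrow> ('c word set option \<times> 'c \<times> 'c word set option) set" where
  "U_E W =
     {(Some X, c, Some Y) | X c Y. X \<in> Res W - {{}} \<and> Y \<in> Res W - {{}} \<and>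
        (\<exists>u. X = left_quotient u W \<and> Y \<subseteq> left_quotient (u @ [c]) W)}
   \<union> {(None, c, x) | c x. x \<in> U_V W}"

end

theory Submission imports Defs begin

lemma build_0[simp]: "(a ## w) 0 = a" by (simp add: build_def)
lemma build_Suc[simp]: "(a ## w) (Suc n) = w n" by (simp add: build_def)

lemma lq_snoc: "left_quotient (u @ [c]) W = {w. c ## w \<in> left_quotient u W}"
  unfolding left_quotient_def by (simp add: build_def conc_conc[symmetric])

lemma lq_nil[simp]: "left_quotient [] W = W"
  unfolding left_quotient_def by simp

lemma closed_lem:
  assumes "topologically_closed W" "\<And>n. left_quotient (prefix n col) W \<noteq> {}"
  shows "col \<in> W"
proof (rule ccontr)
  assume "col \<notin> W"
  from assms(1) obtain L where L: "W = Safe L" unfolding topologically_closed_def by blast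
  with \<open>col \<notin> W\<close> obtain n where n: "prefix n col \<in> L" unfolding Safe_def by blast
  from assms(2)[of n] obtain w where "prefix n col \<frown> w \<in> W" unfolding left_quotient_def by blast
  then have "prefix n (prefix n col \<frown> w) \<notin> L" using L unfolding Safe_def by blast
  moreover have "prefix n (prefix n col \<frown> w) = prefix n col"
    using prefix_conc_length[of "prefix n col" w] by simp
  ultimately show False using n by simp
qed

lemma U_path:
  assumes "\<rho> 0 = Some W" "\<forall>i. (\<rho> i, col i, \<rho> (Suc i)) \<in> U_E W"
  shows "\<exists>X. \<rho> i = Some X \<and> X \<subseteq> left_quotient (prefix i col) W"
proof (induction i)
  case 0
  then show ?case using assms by simp
next
  case (Suc i)
  then obtain X where X: "\<rho> i = Some X" "X \<subseteq> left_quotient (prefix i col) W" by blast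
  from assms(2) have "(\<rho> i, col i, \<rho> (Suc i)) \<in> U_E W" by blast
  with X obtain Y u where Y: "\<rho> (Suc i) = Some Y" "X = left_quotient u W"
     "Y \<subseteq> left_quotient (u @ [col i]) W"
    unfolding U_E_def by auto
  have "Y \<subseteq> left_quotient (prefix i col @ [col i]) W"
    using Y X unfolding lq_snoc by auto
  then show ?case using Y by simp
qed

lemma U_nonempty:
  assumes "\<rho> 0 = Some W" "\<forall>i. (\<rho> i, col i, \<rho> (Suc i)) \<in> U_E W"
  shows "left_quotient (prefix n col) W \<noteq> {}"
proof -
  obtain X where X: "\<rho> n = Some X" "X \<subseteq> left_quotient (prefix n col) W"
    using U_path[OF assms] by blast
  from assms(2) have "(\<rho> n, col n, \<rho> (Suc n)) \<in> U_E W" by blast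
  with X(1) have "X \<noteq> {}" unfolding U_E_def by auto
  with X(2) show ?thesis by blast
qed

lemma fpath_append: "fpath E v (p @ q) v'' \<longleftrightarrow> (\<exists>v'. fpath E v p v' \<and> fpath E v' q v'')"
  by (induction p arbitrary: v) auto

lemma fpath_in: "is_graph V E \<Longrightarrow> v \<in> V \<Longrightarrow> fpath E v p v' \<Longrightarrow> v' \<in> V"
  by (induction p arbitrary: v) (auto simp: is_graph_def)

lemma inf_path:
  assumes "is_graph V E" "v \<in> V"
  shows "\<exists>\<rho> col. \<rho> 0 = v \<and> (\<forall>i. (\<rho> i, col i, \<rho> (Suc i)) \<in> E)"
proof -
  define nx where "nx x = (SOME e. fst e = x \<and> e \<in> E)" for x
  have nx: "fst (nx x) = x \<and> nx x \<in> E" if "x \<in> V" for x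
  proof -
    from assms(1) that obtain c x' where "(x, c, x') \<in> E" unfolding is_graph_def by blast
    then have "\<exists>e. fst e = x \<and> e \<in> E" by force
    then show ?thesis unfolding nx_def by (rule someI_ex)
  qed
  define \<rho> where "\<rho> n = ((\<lambda>x. snd (snd (nx x))) ^^ n) v" for n
  have inV: "\<rho> n \<in> V" for n
  proof (induction n)
    case 0 then show ?case using assms by (simp add: \<rho>_def)
  next
    case (Suc n)
    have "nx (\<rho> n) \<in> E" using nx[OF Suc] by blast
    then have "snd (snd (nx (\<rho> n))) \<in> V" using assms(1) unfolding is_graph_def by auto
    then show ?case by (simp add: \<rho>_def)
  qed
  have "(\<rho> i, fst (snd (nx (\<rho> i))), \<rho> (Suc i)) \<in> E" for i
  proof -
    have "nx (\<rho> i) = (\<rho> i, fst (snd (nx (\<rho> i))), snd (snd (nx (\<rho> i))))"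
      using nx[OF inV[of i]] by (metis prod.collapse)
    then show ?thesis using nx[OF inV[of i]] by (simp add: \<rho>_def)
  qed
  then show ?thesis by (intro exI[of _ \<rho>] exI[of _ "\<lambda>i. fst (snd (nx (\<rho> i)))"]) (simp add: \<rho>_def)
qed

lemma extend_path:
  assumes "fpath E v p v'" "\<rho> 0 = v'" "\<forall>i. (\<rho> i, col i, \<rho> (Suc i)) \<in> E"
  shows "\<exists>\<rho>'. \<rho>' 0 = v \<and> (\<forall>i. (\<rho>' i, (map (fst \<circ> snd) p \<frown> col) i, \<rho>' (Suc i)) \<in> E)"
  using assms(1)
proof (induction p arbitrary: v)
  case Nil
  then show ?case using assms by auto
next
  case (Cons e es)
  obtain a c b where e: "e = (a, c, b)" by (cases e) auto
  with Cons.prems have ab: "a = v" "(v, c, b) \<in> E" "fpath E b es v'" by auto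
  from Cons.IH[OF ab(3)] obtain \<rho>0 where r: "\<rho>0 0 = b"
    "\<forall>i. (\<rho>0 i, (map (fst \<circ> snd) es \<frown> col) i, \<rho>0 (Suc i)) \<in> E" by blast
  have "(\<forall>i. ((v ## \<rho>0) i, (map (fst \<circ> snd) (e # es) \<frown> col) i, (v ## \<rho>0) (Suc i)) \<in> E)"
  proof
    fix i show "((v ## \<rho>0) i, (map (fst \<circ> snd) (e # es) \<frown> col) i, (v ## \<rho>0) (Suc i)) \<in> E"
      using r ab by (cases i) (auto simp: e)
  qed
  moreover have "(v ## \<rho>0) 0 = v" by simp
  ultimately show ?case by blast
qed


lemma Res_lq[simp]: "left_quotient u W \<in> Res W"
  unfolding Res_def by blast

lemma U_graph: "is_graph (U_V W) (U_E W)"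
  unfolding is_graph_def
proof (intro conjI ballI)
  show "U_E W \<subseteq> U_V W \<times> UNIV \<times> U_V W" unfolding U_E_def U_V_def by auto
next
  fix v assume v: "v \<in> U_V W"
  show "\<exists>c v'. (v, c, v') \<in> U_E W"
  proof (cases v)
    case None
    then show ?thesis unfolding U_E_def U_V_def by auto
  next
    case (Some X)
    with v have X: "X \<in> Res W" "X \<noteq> {}" unfolding U_V_def by auto
    then obtain u where u: "X = left_quotient u W" unfolding Res_def by auto
    from X obtain w where w: "w \<in> X" by auto
    have "suffix 1 w \<in> left_quotient (u @ [w 0]) W"
      unfolding lq_snoc using w u by (metis build_split mem_Collect_eq)
    then have "left_quotient (u @ [w 0]) W \<noteq> {}" by auto
    then have "(v, w 0, Some (left_quotient (u @ [w 0]) W)) \<in> U_E W"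
      unfolding U_E_def using Some X u by auto
    then show ?thesis by blast
  qed
qed

lemma U_po: "partial_order_on_set (U_V W) U_le"
  unfolding partial_order_on_set_def
proof (intro conjI ballI impI)
  fix x assume "x \<in> U_V W" then show "U_le x x" by (cases x) auto
next
  fix x y assume "x \<in> U_V W" "y \<in> U_V W" "U_le x y \<and> U_le y x"
  then show "x = y" by (cases x; cases y) auto
next
  fix x y z assume "x \<in> U_V W" "y \<in> U_V W" "z \<in> U_V W" "U_le x y \<and> U_le y z"
  then show "U_le x z" by (cases x; cases y; cases z) auto
qed

lemma U_mono: "monotone_graph (U_V W) (U_E W) U_le"
  unfolding monotone_graph_def
proof (intro conjI U_graph U_po ballI allI impI)
  fix u v v' u' c
  assume V: "u \<in> U_V W" "v \<in> U_V W" "v' \<in> U_V W" "u' \<in> U_V W"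
    and h: "U_le v u \<and> (v, c, v') \<in> U_E W \<and> U_le u' v'"
  show "(u, c, u') \<in> U_E W"
  proof (cases u)
    case None
    then show ?thesis using V unfolding U_E_def by auto
  next
    case (Some X)
    with h obtain X' where X': "v = Some X'" "X' \<subseteq> X" by (cases v) auto
    with h obtain Y' u'' where Y': "v' = Some Y'" "X' = left_quotient u'' W"
       "Y' \<subseteq> left_quotient (u'' @ [c]) W"
      unfolding U_E_def by auto
    with h obtain Y where Y: "u' = Some Y" "Y \<subseteq> Y'" by (cases u') auto
    from V Some obtain w where X: "X = left_quotient w W" "X \<noteq> {}" unfolding U_V_def Res_def by auto
    from V Y have "Y \<in> Res W - {{}}" unfolding U_V_def by auto
    moreover have "Y \<subseteq> left_quotient (w @ [c]) W"
      using Y Y' X' X unfolding lq_snoc by auto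
    moreover have "X \<in> Res W - {{}}" using X by simp
    ultimately have "(Some X, c, Some Y) \<in> {(Some X, c, Some Y) | X c Y. X \<in> Res W - {{}} \<and> Y \<in> Res W - {{}} \<and>
        (\<exists>u. X = left_quotient u W \<and> Y \<subseteq> left_quotient (u @ [c]) W)}" using X by blast
    then show ?thesis unfolding U_E_def using Some Y by blast
  qed
qed

lemma U_wf:
  assumes "wf {(X, Y). X \<in> Res W \<and> Y \<in> Res W \<and> X \<subset> Y}"
  shows "well_founded_on (U_V W) U_le"
  unfolding well_founded_on_def
proof (rule wf_subset)
  let ?R = "{(X, Y). X \<in> Res W \<and> Y \<in> Res W \<and> X \<subset> Y}"
  let ?f = "\<lambda>x. (if x = None then 1::nat else 0, case x of Some X \<Rightarrow> X | None \<Rightarrow> {})"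
  show "wf (inv_image (less_than <*lex*> ?R) ?f)"
    using assms by (intro wf_inv_image wf_lex_prod wf_less_than)
  show "{(x, y). x \<in> U_V W \<and> y \<in> U_V W \<and> U_le x y \<and> x \<noteq> y} \<subseteq> inv_image (less_than <*lex*> ?R) ?f"
  proof (rule subsetI)
    fix p assume "p \<in> {(x, y). x \<in> U_V W \<and> y \<in> U_V W \<and> U_le x y \<and> x \<noteq> y}"
    then obtain x y where "p = (x, y)" "x \<in> U_V W" "y \<in> U_V W" "U_le x y" "x \<noteq> y" by blast
    then show "p \<in> inv_image (less_than <*lex*> ?R) ?f"
      unfolding U_V_def by (cases x; cases y) auto
  qed
qed

lemma U_width:
  assumes "\<forall>A\<subseteq>Res W. antichain_on (\<subseteq>) A \<longrightarrow> (card_of A, \<mu>) \<notin> ordIso"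
  shows "width_less (U_V W) U_le \<mu>"
  unfolding width_less_def
proof (intro allI impI)
  fix A assume A: "A \<subseteq> U_V W" "antichain_on U_le A"
  show "(card_of A, \<mu>) \<notin> ordIso"
  proof (cases "None \<in> A")
    case True
    then have "A = {None}" using A(2) unfolding antichain_on_def by force
    moreover have "antichain_on (\<subseteq>) {W}" unfolding antichain_on_def by auto
    moreover have "{W} \<subseteq> Res W" using Res_lq[of "[]" W] by simp
    ultimately have n: "(card_of {W}, \<mu>) \<notin> ordIso" and "A = {None}" using assms by auto
    have "(card_of {W}, card_of {None::'a word set option}) \<in> ordIso" unfolding card_of_ordIso[symmetric] by (rule exI[of _ "\<lambda>_. None"]) (simp add: bij_betw_def)
    then show ?thesis using n \<open>A = {None}\<close> ordIso_transitive by blast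
  next
    case False
    then have "A \<subseteq> Some ` Res W" using A(1) unfolding U_V_def by auto
    define B where "B = the ` A"
    have bij: "bij_betw the A B" unfolding B_def bij_betw_def inj_on_def
      using \<open>A \<subseteq> Some ` Res W\<close> by (metis False option.exhaust_sel)
    have "B \<subseteq> Res W" unfolding B_def using \<open>A \<subseteq> Some ` Res W\<close> by auto
    moreover have "antichain_on (\<subseteq>) B"
      using A(2) \<open>A \<subseteq> Some ` Res W\<close> unfolding antichain_on_def B_def
      by (smt (verit, ccfv_threshold) U_le.simps(3) image_iff option.sel subsetD)
    ultimately have n: "(card_of B, \<mu>) \<notin> ordIso" using assms by auto
    have "(card_of A, card_of B) \<in> ordIso" using bij card_of_ordIso by blast
    then show ?thesis using n ordIso_transitive ordIso_symmetric by metis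
  qed
qed


lemma U_universal:
  fixes W :: "'c word set"
  assumes closed: "topologically_closed W"
  shows "universal TYPE('t) \<kappa> W (U_V W) (U_E W)"
  unfolding universal_def
proof (intro allI impI)
  fix VT :: "'t set" and ET :: "('t \<times> 'c \<times> 't) set" and t0
  assume "is_tree VT ET t0 \<and> (card_of VT, \<kappa>) \<in> ordLess"
  then have T: "is_graph VT ET" "t0 \<in> VT" "\<And>v. v \<in> VT \<Longrightarrow> \<exists>!p. fpath ET t0 p v"
    unfolding is_tree_def by auto
  show "\<exists>\<phi>. morphism \<phi> VT ET (U_V W) (U_E W) \<and> (satisfies W ET t0 \<longrightarrow> satisfies W (U_E W) (\<phi> t0))"
  proof (cases "satisfies W ET t0")
    case False
    have "morphism (\<lambda>_. None) VT ET (U_V W) (U_E W)"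
      unfolding morphism_def U_V_def U_E_def by auto
    then show ?thesis using False by blast
  next
    case sat: True
    define pth where "pth t = (THE p. fpath ET t0 p t)" for t
    define lab where "lab t = map (fst \<circ> snd) (pth t)" for t
    define \<phi> where "\<phi> t = Some (left_quotient (lab t) W)" for t
    have pth: "fpath ET t0 (pth t) t" if "t \<in> VT" for t
      unfolding pth_def using T(3)[OF that] by (rule theI')
    have pth_eq: "pth t = p" if "t \<in> VT" "fpath ET t0 p t" for t p
      unfolding pth_def using T(3)[OF that(1)] that(2) by (rule the1_equality)
    have ne: "left_quotient (lab t) W \<noteq> {}" if t: "t \<in> VT" for t
    proof -
      obtain \<rho> col where r: "\<rho> 0 = t" "\<forall>i. (\<rho> i, col i, \<rho> (Suc i)) \<in> ET"
        using inf_path[OF T(1) t] by blast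
      obtain \<rho>' where r': "\<rho>' 0 = t0" "\<forall>i. (\<rho>' i, (lab t \<frown> col) i, \<rho>' (Suc i)) \<in> ET"
        using extend_path[OF pth[OF t] r] unfolding lab_def by blast
      have "lab t \<frown> col \<in> W" using sat r' unfolding satisfies_def by blast
      then have "col \<in> left_quotient (lab t) W" unfolding left_quotient_def by simp
      then show ?thesis by blast
    qed
    have edge: "(\<phi> t, c, \<phi> t') \<in> U_E W" if e: "(t, c, t') \<in> ET" for t c t'
    proof -
      have tt: "t \<in> VT" "t' \<in> VT" using e T(1) unfolding is_graph_def by auto
      have "fpath ET t0 (pth t @ [(t, c, t')]) t'"
        unfolding fpath_append using pth[OF tt(1)] e by auto
      then have "pth t' = pth t @ [(t, c, t')]" using pth_eq[OF tt(2)] by blast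
      then have l: "lab t' = lab t @ [c]" unfolding lab_def by simp
      show ?thesis unfolding U_E_def \<phi>_def l using ne[OF tt(1)] ne[OF tt(2)] l by auto
    qed
    have mor: "morphism \<phi> VT ET (U_V W) (U_E W)"
      unfolding morphism_def
    proof (intro conjI)
      show "\<phi> ` VT \<subseteq> U_V W" unfolding U_V_def \<phi>_def using ne by auto
      show "\<forall>(v, c, v')\<in>ET. (\<phi> v, c, \<phi> v') \<in> U_E W" using edge by auto
    qed
    have "pth t0 = []" using pth_eq[OF T(2)] by simp
    then have phi0: "\<phi> t0 = Some W" unfolding \<phi>_def lab_def by simp
    have "satisfies W (U_E W) (\<phi> t0)"
      unfolding satisfies_def phi0
    proof (intro allI impI)
      fix \<rho> col assume "\<rho> 0 = Some W \<and> (\<forall>i. (\<rho> i, col i, \<rho> (Suc i)) \<in> U_E W)"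
      then show "col \<in> W" using closed_lem[OF closed] U_nonempty by blast
    qed
    then show ?thesis using mor by blast
  qed
qed

theorem proposition4p4:
  fixes W :: "'c word set" and \<mu> :: "'m rel"
  assumes "topologically_closed W"
    and "Card_order \<mu>"
    and "wf {(X, Y). X \<in> Res W \<and> Y \<in> Res W \<and> X \<subset> Y}"
    and "\<forall>A\<subseteq>Res W. antichain_on (\<subseteq>) A \<longrightarrow> (card_of A, \<mu>) \<notin> ordIso"
  shows "well_monotone_graph (U_V W) (U_E W) U_le \<and> width_less (U_V W) U_le \<mu> \<and>
         (\<forall>\<kappa> :: 'k rel. Card_order \<kappa> \<longrightarrow> universal TYPE('t) \<kappa> W (U_V W) (U_E W))"
  using U_mono U_wf[OF assms(3)] U_width[OF assms(4)] U_universal[OF assms(1)]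
  unfolding well_monotone_graph_def by blast

end
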